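(* Let $\mathbb{A}$ be a medial algebra over a field of characteristic not $2,3$ and let $c$ be a nonzero idempotent of $\mathbb{A}$. Then the Peirce subspace $\mathbb{A}_c(0)=\ker L_c$ is an ideal of $\mathbb{A}$ and the quotient $\mathbb{A}'=\mathbb{A}/\mathbb{A}_c(0)$ is a medial algebra. If additionally $c$ is semi-simple, then $\mathbb{A}'_{c'}(0)=0$, where $c'$ is the class of $c$ in $\mathbb{A}'$.
   Context: All algebras commutative, possibly nonassociative, finite-dimensional. Medial: $(xy)(zw)=(xz)(yw)$ identically. $L_c:x\mapsto cx$, $\mathbb{A}_c(\lambda)=\ker(L_c-\lambda\mathbf{1})$. An idempotent $c$ is semi-simple if $\mathbb{A}$ is the direct sum of the eigenspaces $\mathbb{A}_c(\lambda)$ over the distinct eigenvalues $\lambda$ of $L_c$. *)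

theory Defs
  imports Complex_Main
begin

definition comm_algebra :: "('k::field \<Rightarrow> 'v::ab_group_add \<Rightarrow> 'v) \<Rightarrow> ('v \<Rightarrow> 'v \<Rightarrow> 'v) \<Rightarrow> bool" where
  "comm_algebra s m \<longleftrightarrow> vector_space s \<and> (\<forall>x y. m x y = m y x) \<and>
     (\<forall>x. Vector_Spaces.linear s s (m x))"

definition fin_dim :: "('k::field \<Rightarrow> 'v::ab_group_add \<Rightarrow> 'v) \<Rightarrow> bool" where
  "fin_dim s \<longleftrightarrow> (\<exists>B. finite B \<and> module.span s B = UNIV)"

definition medial :: "('v \<Rightarrow> 'v \<Rightarrow> 'v) \<Rightarrow> bool" where
  "medial m \<longleftrightarrow> (\<forall>x y z w. m (m x y) (m z w) = m (m x z) (m y w))"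

definition peirce :: "('k::field \<Rightarrow> 'v::ab_group_add \<Rightarrow> 'v) \<Rightarrow> ('v \<Rightarrow> 'v \<Rightarrow> 'v) \<Rightarrow> 'v \<Rightarrow> 'k \<Rightarrow> 'v set" where
  "peirce s m c t = {x. m c x = s t x}"

definition alg_ideal :: "('k::field \<Rightarrow> 'v::ab_group_add \<Rightarrow> 'v) \<Rightarrow> ('v \<Rightarrow> 'v \<Rightarrow> 'v) \<Rightarrow> 'v set \<Rightarrow> bool" where
  "alg_ideal s m I \<longleftrightarrow> module.subspace s I \<and> (\<forall>a x. x \<in> I \<longrightarrow> m a x \<in> I)"

text \<open>c is semi-simple: A is the direct sum of the eigenspaces A_c(lambda), i.e. every x
  decomposes uniquely as a finite sum of elements of the eigenspaces (eigenspaces of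
  non-eigenvalues are zero, so this is the direct sum over the distinct eigenvalues).\<close>
definition semi_simple :: "('k::field \<Rightarrow> 'v::ab_group_add \<Rightarrow> 'v) \<Rightarrow> ('v \<Rightarrow> 'v \<Rightarrow> 'v) \<Rightarrow> 'v \<Rightarrow> bool" where
  "semi_simple s m c \<longleftrightarrow> m c c = c \<and>
     (\<forall>x. \<exists>!f. (\<forall>t. f t \<in> peirce s m c t) \<and> finite {t. f t \<noteq> 0} \<and>
             x = sum f {t. f t \<noteq> 0})"

text \<open>pi : A \<rightarrow> B is a quotient map of algebras with kernel I (B = A/I up to isomorphism).\<close>
definition quotient_map ::
  "('k::field \<Rightarrow> 'v::ab_group_add \<Rightarrow> 'v) \<Rightarrow> ('v \<Rightarrow> 'v \<Rightarrow> 'v) \<Rightarrow>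
   ('k \<Rightarrow> 'w::ab_group_add \<Rightarrow> 'w) \<Rightarrow> ('w \<Rightarrow> 'w \<Rightarrow> 'w) \<Rightarrow> 'v set \<Rightarrow> ('v \<Rightarrow> 'w) \<Rightarrow> bool" where
  "quotient_map s m s' m' I \<pi> \<longleftrightarrow> Vector_Spaces.linear s s' \<pi> \<and> surj \<pi> \<and>
     (\<forall>x y. \<pi> (m x y) = m' (\<pi> x) (\<pi> y)) \<and> {x. \<pi> x = 0} = I"

end

theory Submission
  imports Defs
begin

theorem proposition4p1:
  fixes s :: "'k::field \<Rightarrow> 'v::ab_group_add \<Rightarrow> 'v" and m :: "'v \<Rightarrow> 'v \<Rightarrow> 'v"
    and s' :: "'k \<Rightarrow> 'w::ab_group_add \<Rightarrow> 'w" and m' :: "'w \<Rightarrow> 'w \<Rightarrow> 'w"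
    and c :: 'v and \<pi> :: "'v \<Rightarrow> 'w"
  assumes char: "(2::'k) \<noteq> 0" "(3::'k) \<noteq> 0"
    and alg: "comm_algebra s m" and fd: "fin_dim s" and med: "medial m"
    and idem: "m c c = c" and nz: "c \<noteq> 0"
    and algB: "comm_algebra s' m'"
  shows "alg_ideal s m (peirce s m c 0)
         \<and> (quotient_map s m s' m' (peirce s m c 0) \<pi> \<longrightarrow>
              medial m'
              \<and> (semi_simple s m c \<longrightarrow> peirce s' m' (\<pi> c) 0 = {0}))"
proof -
  have vs: "vector_space s" and comm: "\<And>x y. m x y = m y x"
    and lin: "\<And>x. Vector_Spaces.linear s s (m x)"
    using alg unfolding comm_algebra_def by auto
  have mh: "\<And>x. module_hom s s (m x)" using lin by (simp add: linear_iff_module_hom)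
  have vs': "vector_space s'" and lin': "\<And>x. Vector_Spaces.linear s' s' (m' x)"
    using algB unfolding comm_algebra_def by auto
  have mh': "\<And>x. module_hom s' s' (m' x)" using lin' by (simp add: linear_iff_module_hom)
  have md: "module s" using vs by (simp add: vector_space_def module_def)
  have md': "module s'" using vs' by (simp add: vector_space_def module_def)
  have z: "\<And>x. m x 0 = 0" using mh module_hom.zero by metis
  have z': "\<And>x. m' x 0 = 0" using mh' module_hom.zero by metis
  have P0: "peirce s m c 0 = {x. m c x = 0}"
    unfolding peirce_def using module.scale_zero_left[OF md] by simp
  have ideal: "alg_ideal s m (peirce s m c 0)"
    unfolding alg_ideal_def P0
  proof
    show "module.subspace s {x. m c x = 0}" using module_hom.subspace_kernel[OF mh] .
    show "\<forall>a x. x \<in> {x. m c x = 0} \<longrightarrow> m a x \<in> {x. m c x = 0}"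
    proof (intro allI impI)
      fix a x assume "x \<in> {x. m c x = 0}"
      hence "m c x = 0" by simp
      have "m c (m a x) = m (m c c) (m a x)" using idem by simp
      also have "\<dots> = m (m c a) (m c x)" using med unfolding medial_def by blast
      also have "\<dots> = 0" using \<open>m c x = 0\<close> z by simp
      finally show "m a x \<in> {x. m c x = 0}" by simp
    qed
  qed
  show ?thesis
  proof (rule conjI[OF ideal], rule impI, rule conjI)
    assume q: "quotient_map s m s' m' (peirce s m c 0) \<pi>"
    have sj: "surj \<pi>" and hom: "\<And>x y. \<pi> (m x y) = m' (\<pi> x) (\<pi> y)"
      and ker: "{x. \<pi> x = 0} = peirce s m c 0"
      using q unfolding quotient_map_def by auto
    show "medial m'"
      unfolding medial_def
    proof (intro allI)
      fix x y z w
      obtain a where a: "x = \<pi> a" using sj by (metis surj_def)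
      obtain b where b: "y = \<pi> b" using sj by (metis surj_def)
      obtain d where d: "z = \<pi> d" using sj by (metis surj_def)
      obtain e where e: "w = \<pi> e" using sj by (metis surj_def)
      have "m (m a b) (m d e) = m (m a d) (m b e)" using med unfolding medial_def by blast
      hence "\<pi> (m (m a b) (m d e)) = \<pi> (m (m a d) (m b e))" by simp
      thus "m' (m' x y) (m' z w) = m' (m' x z) (m' y w)" by (simp add: hom a b d e)
    qed
    show "semi_simple s m c \<longrightarrow> peirce s' m' (\<pi> c) 0 = {0}"
    proof
      assume ss: "semi_simple s m c"
      have P0': "peirce s' m' (\<pi> c) 0 = {x. m' (\<pi> c) x = 0}"
        unfolding peirce_def using module.scale_zero_left[OF md'] by simp
      have key: "m c y = 0" if h: "m c (m c y) = 0" for y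
      proof -
        obtain f where f: "\<forall>t. f t \<in> peirce s m c t" "finite {t. f t \<noteq> 0}"
            "y = sum f {t. f t \<noteq> 0}"
          using ss unfolding semi_simple_def by blast
        define S where "S = {t. f t \<noteq> 0}"
        have ef: "\<And>t. m c (f t) = s t (f t)" using f(1) unfolding peirce_def by blast
        define g where "g t = s (t*t) (f t)" for t
        have ge: "\<And>t. g t \<in> peirce s m c t"
        proof -
          fix t
          have "m c (g t) = s (t*t) (m c (f t))"
            unfolding g_def by (simp add: module_hom.scale[OF mh])
          also have "\<dots> = s t (g t)" unfolding g_def ef
            by (simp add: module.scale_scale[OF md] mult_ac)
          finally show "g t \<in> peirce s m c t" unfolding peirce_def by simp
        qed
        have gsub: "{t. g t \<noteq> 0} \<subseteq> S"
          unfolding g_def S_def using module.scale_zero_right[OF md] by auto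
        have "m c (m c y) = (\<Sum>t\<in>S. m c (m c (f t)))"
          unfolding f(3) S_def[symmetric] by (simp add: module_hom.sum[OF mh])
        also have "\<dots> = (\<Sum>t\<in>S. g t)"
        proof (rule sum.cong)
          fix t show "m c (m c (f t)) = g t"
            unfolding g_def by (simp add: ef module_hom.scale[OF mh] module.scale_scale[OF md])
        qed simp
        also have "\<dots> = (\<Sum>t\<in>{t. g t \<noteq> 0}. g t)"
          by (rule sum.mono_neutral_right) (use f(2) gsub in \<open>auto simp: S_def\<close>)
        finally have g0: "(0::'v) = sum g {t. g t \<noteq> 0}" using h by simp
        have gfin: "finite {t. g t \<noteq> 0}" using f(2) gsub S_def finite_subset by metis
        have z0: "\<And>t. (\<lambda>_. 0::'v) t \<in> peirce s m c t"
          unfolding peirce_def using z module.scale_zero_right[OF md] by simp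
        define P where "P = (\<lambda>f. (\<forall>t. f t \<in> peirce s m c t) \<and> finite {t. f t \<noteq> 0} \<and> (0::'v) = sum f {t. f t \<noteq> 0})"
        have ex: "\<exists>!f. P f" unfolding P_def using ss unfolding semi_simple_def by blast
        have Pg: "P g" unfolding P_def using ge gfin g0 by blast
        have P0f: "P (\<lambda>_. 0)" unfolding P_def using z0 by simp
        have "g = (\<lambda>_. 0)" using ex Pg P0f by blast
        hence g00: "\<And>t. s (t*t) (f t) = 0" unfolding g_def by metis
        have "\<And>t. s t (f t) = 0"
        proof -
          fix t show "s t (f t) = 0"
          proof (cases "t = 0")
            case True thus ?thesis using module.scale_zero_left[OF md] by simp
          next
            case False
            have "s (inverse t) (s (t*t) (f t)) = s t (f t)"
              using False by (simp add: module.scale_scale[OF md] field_simps)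
            moreover have "s (inverse t) (0::'v) = 0" by (rule module.scale_zero_right[OF md])
            ultimately show ?thesis using g00 by simp
          qed
        qed
        hence "\<And>t. m c (f t) = 0" using ef by simp
        thus "m c y = 0" unfolding f(3) by (simp add: module_hom.sum[OF mh])
      qed
      show "peirce s' m' (\<pi> c) 0 = {0}"
        unfolding P0'
      proof (intro set_eqI iffI)
        fix x assume "x \<in> {x. m' (\<pi> c) x = 0}"
        then have hx: "m' (\<pi> c) x = 0" by simp
        obtain y where y: "x = \<pi> y" using sj by (metis surj_def)
        have "\<pi> (m c y) = 0" using hx y hom by simp
        hence "m c y \<in> peirce s m c 0" using ker by blast
        hence "m c (m c y) = 0" using P0 by simp
        hence "m c y = 0" by (rule key)
        hence "y \<in> peirce s m c 0" using P0 by simp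
        hence "\<pi> y = 0" using ker by blast
        thus "x \<in> {0}" using y by simp
      next
        fix x assume "x \<in> {0::'w}" thus "x \<in> {x. m' (\<pi> c) x = 0}" using z' by simp
      qed
    qed
  qed
qed

end
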